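(* For every nonnegative integer $n$ and every $0\le k\le n$, \[ B_{n,k}(q)=q^{2nk-n^2}\,B_{n,n-k}(q). \]
   Context: $\mathcal{B}_n$ is the group of signed permutations of $[n]$ (bijections $\pi$ of $\{\pm1,\dots,\pm n\}$ with $\pi(-i)=-\pi(i)$, written $\pi=\pi_1\cdots\pi_n$), integers ordered naturally. Set $\pi_0=0$; $\mathrm{Des}_B(\pi)=\{i\in\{0,\dots,n-1\}:\pi_i>\pi_{i+1}\}$, $\mathrm{des}_B(\pi)=|\mathrm{Des}_B(\pi)|$, $\mathrm{neg}(\pi)=|\{i\in[n]:\pi_i<0\}|$, $\mathrm{fmaj}(\pi)=\sum_{i\in\mathrm{Des}_B(\pi)}2i+\mathrm{neg}(\pi)$. Define $B_{n,k}(q)$ by $\sum_{\pi\in\mathcal{B}_n}t^{\mathrm{des}_B(\pi)}q^{\mathrm{fmaj}(\pi)}=\sum_{k=0}^nB_{n,k}(q)t^k$. *)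

theory Defs
  imports Complex_Main
begin

text \<open>A signed permutation of [n] is represented by its window notation
  pi_1 ... pi_n as a list of integers of length n whose absolute values
  are exactly 1..n.\<close>
definition signed_perms :: "nat \<Rightarrow> int list set" where
  "signed_perms n = {xs. length xs = n \<and> set (map abs xs) = {1..int n}}"

text \<open>pi_i with the convention pi_0 = 0 (so index i refers to pi_i).\<close>
definition sp_val :: "int list \<Rightarrow> nat \<Rightarrow> int" where
  "sp_val xs i = (0 # xs) ! i"

definition DesB :: "int list \<Rightarrow> nat set" where
  "DesB xs = {i. i < length xs \<and> sp_val xs i > sp_val xs (Suc i)}"

definition desB :: "int list \<Rightarrow> nat" where
  "desB xs = card (DesB xs)"

definition negB :: "int list \<Rightarrow> nat" where
  "negB xs = card {i. 1 \<le> i \<and> i \<le> length xs \<and> sp_val xs i < 0}"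

definition fmaj :: "int list \<Rightarrow> nat" where
  "fmaj xs = (\<Sum>i\<in>DesB xs. 2 * i) + negB xs"

text \<open>B_{n,k}(q): coefficient of t^k in the bivariate generating function,
  i.e. the sum of q^fmaj over signed permutations with k descents,
  regarded as a polynomial function of q.\<close>
definition Bnk :: "nat \<Rightarrow> nat \<Rightarrow> 'a::comm_ring_1 \<Rightarrow> 'a" where
  "Bnk n k q = (\<Sum>\<pi>\<in>{\<pi>\<in>signed_perms n. desB \<pi> = k}. q ^ fmaj \<pi>)"

end

theory Submission
  imports Defs
begin

definition phiB :: "nat \<Rightarrow> int \<Rightarrow> int" where
  "phiB n v = (if v > 0 then v - int n - 1 else v + int n + 1)"

definition flipB :: "nat \<Rightarrow> int list \<Rightarrow> int list" where
  "flipB n xs = rev (map (phiB n) xs)"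

lemma sp_props:
  assumes "xs \<in> signed_perms n"
  shows "length xs = n" "\<And>v. v \<in> set xs \<Longrightarrow> v \<noteq> 0 \<and> \<bar>v\<bar> \<le> int n"
    "distinct (map abs xs)"
proof -
  show "length xs = n" using assms by (simp add: signed_perms_def)
  show "\<And>v. v \<in> set xs \<Longrightarrow> v \<noteq> 0 \<and> \<bar>v\<bar> \<le> int n"
  proof -
    fix v assume "v \<in> set xs"
    then have "\<bar>v\<bar> \<in> set (map abs xs)" by simp
    then show "v \<noteq> 0 \<and> \<bar>v\<bar> \<le> int n" using assms by (auto simp: signed_perms_def)
  qed
  show "distinct (map abs xs)"
    using assms by (intro card_distinct) (simp add: signed_perms_def)
qed

lemma sp_val_0[simp]: "sp_val xs 0 = 0" by (simp add: sp_val_def)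

lemma sp_val_Suc: "sp_val xs (Suc i) = xs ! i" by (simp add: sp_val_def)

lemma sp_val_range:
  assumes "xs \<in> signed_perms n" "1 \<le> i" "i \<le> n"
  shows "sp_val xs i \<noteq> 0 \<and> \<bar>sp_val xs i\<bar> \<le> int n"
proof -
  obtain j where j: "i = Suc j" using assms(2) by (cases i) auto
  have "xs ! j \<in> set xs" using assms sp_props(1)[OF assms(1)] j by simp
  then show ?thesis using sp_props(2)[OF assms(1)] j by (simp add: sp_val_Suc)
qed

lemma sp_val_dist:
  assumes "xs \<in> signed_perms n" "1 \<le> i" "i < j" "j \<le> n"
  shows "\<bar>sp_val xs i\<bar> \<noteq> \<bar>sp_val xs j\<bar>"
proof -
  obtain i' where i: "i = Suc i'" using assms(2) by (cases i) auto
  obtain j' where j: "j = Suc j'" using assms by (cases j) auto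
  have d: "distinct (map abs xs)" and l: "length xs = n" using sp_props[OF assms(1)] by auto
  have "map abs xs ! i' \<noteq> map abs xs ! j'"
    using nth_eq_iff_index_eq[OF d, of i' j'] l assms i j by simp
  then show ?thesis using l assms i j by (simp add: sp_val_Suc)
qed

lemma sp_val_flip:
  assumes "length xs = n" "1 \<le> i" "i \<le> n"
  shows "sp_val (flipB n xs) i = phiB n (sp_val xs (n + 1 - i))"
proof -
  obtain i' where i: "i = Suc i'" using assms(2) by (cases i) auto
  have "n + 1 - i = Suc (n - i)" using assms by simp
  then show ?thesis using assms i
    by (simp add: sp_val_Suc flipB_def rev_nth)
qed

lemma flip_in:
  assumes "xs \<in> signed_perms n"
  shows "flipB n xs \<in> signed_perms n"
proof -
  have l: "length xs = n" using sp_props[OF assms] by simp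
  have ab: "\<bar>phiB n v\<bar> = int n + 1 - \<bar>v\<bar>" if "v \<in> set xs" for v
  proof -
    have "v \<noteq> 0 \<and> \<bar>v\<bar> \<le> int n" using sp_props(2)[OF assms] that by blast
    then show ?thesis by (auto simp: phiB_def)
  qed
  have "set (map abs (flipB n xs)) = (\<lambda>a. int n + 1 - a) ` set (map abs xs)"
    using ab by (auto simp: flipB_def image_image)
  also have "\<dots> = (\<lambda>a. int n + 1 - a) ` {1..int n}"
    using assms by (simp add: signed_perms_def)
  also have "\<dots> = {1..int n}"
  proof
    show "(\<lambda>a. int n + 1 - a) ` {1..int n} \<subseteq> {1..int n}" by auto
    show "{1..int n} \<subseteq> (\<lambda>a. int n + 1 - a) ` {1..int n}"
    proof
      fix x assume "x \<in> {1..int n}"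
      then show "x \<in> (\<lambda>a. int n + 1 - a) ` {1..int n}"
        by (intro image_eqI[where x="int n + 1 - x"]) auto
    qed
  qed
  finally show ?thesis using l by (simp add: signed_perms_def flipB_def)
qed

lemma flip_flip:
  assumes "xs \<in> signed_perms n"
  shows "flipB n (flipB n xs) = xs"
proof -
  have "phiB n (phiB n v) = v" if "v \<in> set xs" for v
  proof -
    have "v \<noteq> 0 \<and> \<bar>v\<bar> \<le> int n" using sp_props(2)[OF assms] that by blast
    then show ?thesis by (auto simp: phiB_def)
  qed
  then show ?thesis by (simp add: flipB_def rev_map[symmetric] map_idI)
qed

lemma desB_sum:
  "int (desB xs) = (\<Sum>j<length xs. if sp_val xs j > sp_val xs (Suc j) then 1 else 0)"
proof -
  have "DesB xs = {j\<in>{..<length xs}. sp_val xs j > sp_val xs (Suc j)}"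
    by (auto simp: DesB_def)
  then show ?thesis
    by (simp add: desB_def sum.If_cases Int_def)
qed

lemma fmaj_sum:
  "int (fmaj xs) = (\<Sum>j<length xs. if sp_val xs j > sp_val xs (Suc j) then 2 * int j else 0)
     + (\<Sum>i\<in>{1..length xs}. if sp_val xs i < 0 then 1 else 0)"
proof -
  have "DesB xs = {j\<in>{..<length xs}. sp_val xs j > sp_val xs (Suc j)}"
    by (auto simp: DesB_def)
  moreover have "{i. 1 \<le> i \<and> i \<le> length xs \<and> sp_val xs i < 0} = {i\<in>{1..length xs}. sp_val xs i < 0}"
    by auto
  ultimately show ?thesis
    by (simp add: fmaj_def negB_def sum.If_cases Int_def of_nat_sum)
qed

lemma tele_aux:
  fixes E :: "nat \<Rightarrow> int"
  shows "2 * (\<Sum>j<m. (int m - int j) * (1 + E (Suc (Suc j)) - E (Suc j)))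
     = int m * (int m + 1) + 2 * (\<Sum>i\<in>{1..Suc m}. E i) - 2 * (int m + 1) * E 1"
proof (induction m)
  case 0
  then show ?case by simp
next
  case (Suc m)
  let ?X = "\<lambda>j. 1 + E (Suc (Suc j)) - E (Suc j)"
  have t: "(\<Sum>j<Suc m. E (Suc (Suc j)) - E (Suc j)) = E (Suc (Suc m)) - E 1"
    using sum_lessThan_telescope[of "\<lambda>i. E (Suc i)" "Suc m"] by simp
  have s1: "(\<Sum>j<Suc m. ?X j) = int (Suc m) + E (Suc (Suc m)) - E 1"
    using t by (simp add: sum.distrib sum_subtractf)
  have "(\<Sum>j<Suc m. (int (Suc m) - int j) * ?X j)
      = (\<Sum>j<Suc m. (int m - int j) * ?X j + ?X j)"
    by (rule sum.cong) (auto simp: algebra_simps)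
  also have "\<dots> = (\<Sum>j<Suc m. (int m - int j) * ?X j) + (\<Sum>j<Suc m. ?X j)"
    by (simp add: sum.distrib)
  also have "(\<Sum>j<Suc m. (int m - int j) * ?X j) = (\<Sum>j<m. (int m - int j) * ?X j)"
    by simp
  finally have "(\<Sum>j<Suc m. (int (Suc m) - int j) * ?X j)
      = (\<Sum>j<m. (int m - int j) * ?X j) + (int (Suc m) + E (Suc (Suc m)) - E 1)"
    using s1 by simp
  moreover have "(\<Sum>i\<in>{1..Suc (Suc m)}. E i) = (\<Sum>i\<in>{1..Suc m}. E i) + E (Suc (Suc m))"
    by simp
  ultimately show ?case using Suc.IH by (simp add: algebra_simps)
qed

lemma core:
  assumes P: "xs \<in> signed_perms n" and n0: "n = Suc m"
  shows "int (desB xs) + int (desB (flipB n xs)) = int n"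
    and "int (fmaj xs) - int (fmaj (flipB n xs)) = 2 * int n * int (desB xs) - int n ^ 2"
proof -
  have l: "length xs = n" using sp_props(1)[OF P] .
  have l': "length (flipB n xs) = n" using l by (simp add: flipB_def)
  define v where "v = sp_val xs"
  define w where "w = sp_val (flipB n xs)"
  define D where "D j = (if v j > v (Suc j) then 1 else 0 :: int)" for j
  define D' where "D' j = (if w j > w (Suc j) then 1 else 0 :: int)" for j
  define E where "E i = (if v i < 0 then 1 else 0 :: int)" for i
  have hv: "v i \<noteq> 0 \<and> \<bar>v i\<bar> \<le> int n" if "1 \<le> i" "i \<le> n" for i
    using sp_val_range[OF P that] by (simp add: v_def)
  have hw: "w i = phiB n (v (n + 1 - i))" if "1 \<le> i" "i \<le> n" for i
    using sp_val_flip[OF l that] by (simp add: v_def w_def)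
  have loc: "D (Suc j) + D' (m - j) = 1 + E (Suc (Suc j)) - E (Suc j)" if "j < m" for j
  proof -
    have a: "v (Suc j) \<noteq> 0 \<and> \<bar>v (Suc j)\<bar> \<le> int n" using hv[of "Suc j"] that n0 by simp
    have b: "v (Suc (Suc j)) \<noteq> 0 \<and> \<bar>v (Suc (Suc j))\<bar> \<le> int n" using hv[of "Suc (Suc j)"] that n0 by simp
    have ab: "\<bar>v (Suc j)\<bar> \<noteq> \<bar>v (Suc (Suc j))\<bar>"
      using sp_val_dist[OF P, of "Suc j" "Suc (Suc j)"] that n0 by (simp add: v_def)
    have w1: "w (m - j) = phiB n (v (Suc (Suc j)))"
      using hw[of "m - j"] that n0 by (simp add: Suc_diff_le)
    have w2: "w (Suc (m - j)) = phiB n (v (Suc j))"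
      using hw[of "Suc (m - j)"] that n0 by (simp add: Suc_diff_le)
    show ?thesis using a b ab unfolding D_def D'_def E_def w1 w2 phiB_def
      by (auto split: if_splits)
  qed
  have D0: "D 0 = E 1" using hv[of 1] n0 by (auto simp: D_def E_def v_def)
  have D'0: "D' 0 = 1 - E n"
  proof -
    have "w 1 = phiB n (v n)" using hw[of 1] n0 by simp
    moreover have "w 0 = 0" by (simp add: w_def)
    ultimately show ?thesis using hv[of n] n0 by (auto simp: D'_def E_def phiB_def)
  qed
  have E': "(if w i < 0 then 1 else 0 :: int) = 1 - E (n + 1 - i)" if "1 \<le> i" "i \<le> n" for i
  proof -
    have "v (n + 1 - i) \<noteq> 0 \<and> \<bar>v (n + 1 - i)\<bar> \<le> int n" using hv[of "n + 1 - i"] that by simp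
    then show ?thesis using hw[OF that] by (auto simp: E_def phiB_def)
  qed
  have SD: "(\<Sum>j<n. D j) = D 0 + (\<Sum>j<m. D (Suc j))"
    unfolding n0 sum.lessThan_Suc_shift by simp
  have rev1: "(\<Sum>j<m. g (Suc j)) = (\<Sum>j<m. g (m - j))" for g :: "nat \<Rightarrow> int"
  proof -
    have "(\<Sum>j<m. g (Suc j)) = (\<Sum>j<m. g (Suc (m - Suc j)))"
      using sum.nat_diff_reindex[of "\<lambda>j. g (Suc j)" m] by simp
    also have "\<dots> = (\<Sum>j<m. g (m - j))"
      by (rule sum.cong) (auto simp: Suc_diff_Suc)
    finally show ?thesis .
  qed
  have SD': "(\<Sum>j<n. D' j) = D' 0 + (\<Sum>j<m. D' (m - j))"
    unfolding n0 sum.lessThan_Suc_shift rev1[of D'] by simp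
  have tele: "(\<Sum>j<m. E (Suc (Suc j)) - E (Suc j)) = E (Suc m) - E 1"
    using sum_lessThan_telescope[of "\<lambda>i. E (Suc i)" m] by simp
  have dsum: "int (desB xs) = (\<Sum>j<n. D j)"
    using desB_sum[of xs] l by (simp add: D_def v_def)
  have dsum': "int (desB (flipB n xs)) = (\<Sum>j<n. D' j)"
    using desB_sum[of "flipB n xs"] l' by (simp add: D'_def w_def)
  have "(\<Sum>j<m. D (Suc j)) + (\<Sum>j<m. D' (m - j)) = (\<Sum>j<m. 1 + E (Suc (Suc j)) - E (Suc j))"
    by (simp add: sum.distrib[symmetric] loc)
  also have "\<dots> = int m + E (Suc m) - E 1"
    using tele by (simp add: sum.distrib sum_subtractf)
  finally have dd: "(\<Sum>j<m. D (Suc j)) + (\<Sum>j<m. D' (m - j)) = int m + E (Suc m) - E 1" .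
  show "int (desB xs) + int (desB (flipB n xs)) = int n"
    using dsum dsum' SD SD' dd D0 D'0 n0 by simp
  have fsum: "int (fmaj xs) = (\<Sum>j<n. 2 * int j * D j) + (\<Sum>i\<in>{1..n}. E i)"
    using fmaj_sum[of xs] l by (simp add: D_def E_def v_def if_distrib cong: if_cong)
  have fsum': "int (fmaj (flipB n xs)) = (\<Sum>j<n. 2 * int j * D' j) + (\<Sum>i\<in>{1..n}. 1 - E (n + 1 - i))"
  proof -
    have "(\<Sum>i\<in>{1..n}. if w i < 0 then 1 else 0 :: int) = (\<Sum>i\<in>{1..n}. 1 - E (n + 1 - i))"
      by (rule sum.cong) (auto simp: E')
    then show ?thesis
      using fmaj_sum[of "flipB n xs"] l' by (simp add: D'_def w_def if_distrib cong: if_cong)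
  qed
  have negrev: "(\<Sum>i\<in>{1..n}. E (n + 1 - i)) = (\<Sum>i\<in>{1..n}. E i)"
    using sum.atLeastAtMost_rev[of E 1 n] by simp
  have F1: "(\<Sum>j<n. 2 * int j * D j) = (\<Sum>j<m. 2 * int (Suc j) * D (Suc j))"
    unfolding n0 sum.lessThan_Suc_shift by simp
  have F2: "(\<Sum>j<n. 2 * int j * D' j) = (\<Sum>j<m. 2 * int (m - j) * D' (m - j))"
    unfolding n0 sum.lessThan_Suc_shift using rev1[of "\<lambda>j. 2 * int j * D' j"] by simp
  have F3: "(\<Sum>j<m. 2 * int (Suc j) * D (Suc j)) - (\<Sum>j<m. 2 * int (m - j) * D' (m - j))
      - 2 * int n * (\<Sum>j<m. D (Suc j))
      = - 2 * (\<Sum>j<m. (int m - int j) * (1 + E (Suc (Suc j)) - E (Suc j)))"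
  proof -
    have "(\<Sum>j<m. 2 * int (Suc j) * D (Suc j)) - (\<Sum>j<m. 2 * int (m - j) * D' (m - j))
      - 2 * int n * (\<Sum>j<m. D (Suc j))
      = (\<Sum>j<m. 2 * int (Suc j) * D (Suc j) - 2 * int (m - j) * D' (m - j) - 2 * int n * D (Suc j))"
      by (simp add: sum_subtractf sum_distrib_left)
    also have "\<dots> = (\<Sum>j<m. - 2 * ((int m - int j) * (1 + E (Suc (Suc j)) - E (Suc j))))"
    proof (rule sum.cong)
      fix j assume "j \<in> {..<m}"
      then have jm: "j < m" by simp
      have "1 + E (Suc (Suc j)) - E (Suc j) = D (Suc j) + D' (m - j)" using loc[OF jm] by simp
      moreover have "int (m - j) = int m - int j" using jm by simp
      ultimately show "2 * int (Suc j) * D (Suc j) - 2 * int (m - j) * D' (m - j) - 2 * int n * D (Suc j)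
          = - 2 * ((int m - int j) * (1 + E (Suc (Suc j)) - E (Suc j)))"
        using n0 by (simp add: algebra_simps)
    qed simp
    also have "\<dots> = - 2 * (\<Sum>j<m. (int m - int j) * (1 + E (Suc (Suc j)) - E (Suc j)))"
      by (simp add: sum_distrib_left)
    finally show ?thesis .
  qed
  have T: "2 * (\<Sum>j<m. (int m - int j) * (1 + E (Suc (Suc j)) - E (Suc j)))
     = int m * (int m + 1) + 2 * (\<Sum>i\<in>{1..Suc m}. E i) - 2 * (int m + 1) * E 1"
    by (rule tele_aux)
  have S1: "(\<Sum>i\<in>{1..n}. 1 - E (n + 1 - i)) = int n - (\<Sum>i\<in>{1..n}. E i)"
    using negrev by (simp add: sum_subtractf)
  show "int (fmaj xs) - int (fmaj (flipB n xs)) = 2 * int n * int (desB xs) - int n ^ 2"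
    using fsum fsum' F1 F2 F3 T S1 dsum SD D0 n0 by (simp add: algebra_simps power2_eq_square)
qed

theorem proposition2p3:
  fixes n k :: nat and q :: complex
  assumes "k \<le> n" and "q \<noteq> 0"
  shows "Bnk n k q = q powi (2 * int n * int k - int n ^ 2) * Bnk n (n - k) q"
proof (cases n)
  case 0
  then show ?thesis using assms by simp
next
  case (Suc m)
  define A where "A j = {\<pi>\<in>signed_perms n. desB \<pi> = j}" for j
  have des: "desB (flipB n xs) = n - desB xs" if "xs \<in> signed_perms n" for xs
    using core(1)[OF that Suc] by linarith
  have img: "flipB n ` A (n - j) \<subseteq> A j" if "j \<le> n" for j
  proof
    fix y assume "y \<in> flipB n ` A (n - j)"
    then obtain x where x: "x \<in> A (n - j)" "y = flipB n x" by blast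
    then have x1: "x \<in> signed_perms n" and x2: "desB x = n - j" by (simp_all add: A_def)
    have "y \<in> signed_perms n" using flip_in[OF x1] x(2) by simp
    moreover have "desB y = j" using des[OF x1] x2 x(2) that by simp
    ultimately show "y \<in> A j" by (simp add: A_def)
  qed
  have bij: "bij_betw (flipB n) (A (n - k)) (A k)"
  proof (rule bij_betw_byWitness[where f'="flipB n"])
    show "\<forall>a\<in>A (n - k). flipB n (flipB n a) = a" using flip_flip unfolding A_def by blast
    show "\<forall>a\<in>A k. flipB n (flipB n a) = a" using flip_flip unfolding A_def by blast
    show "flipB n ` A (n - k) \<subseteq> A k" using img assms(1) by blast
    show "flipB n ` A k \<subseteq> A (n - k)" using img[of "n - k"] assms(1) by simp
  qed
  have "Bnk n k q = (\<Sum>\<pi>\<in>A k. q ^ fmaj \<pi>)" by (simp add: Bnk_def A_def)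
  also have "\<dots> = (\<Sum>\<sigma>\<in>A (n - k). q ^ fmaj (flipB n \<sigma>))"
    using sum.reindex_bij_betw[OF bij, of "\<lambda>\<pi>. q ^ fmaj \<pi>"] by simp
  also have "\<dots> = (\<Sum>\<sigma>\<in>A (n - k). q powi (2 * int n * int k - int n ^ 2) * q ^ fmaj \<sigma>)"
  proof (rule sum.cong)
    fix \<sigma> assume s: "\<sigma> \<in> A (n - k)"
    define \<pi> where "\<pi> = flipB n \<sigma>"
    have sp: "\<sigma> \<in> signed_perms n" using s by (simp add: A_def)
    have p: "\<pi> \<in> signed_perms n" using flip_in[OF sp] by (simp add: \<pi>_def)
    have dk: "desB \<pi> = k" using des[OF sp] s assms(1) by (auto simp: A_def \<pi>_def)
    have ff: "flipB n \<pi> = \<sigma>" using flip_flip[OF sp] by (simp add: \<pi>_def)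
    have e: "int (fmaj \<pi>) = (2 * int n * int k - int n ^ 2) + int (fmaj \<sigma>)"
      using core(2)[OF p Suc] ff dk by simp
    have "q ^ fmaj \<pi> = q powi int (fmaj \<pi>)" by simp
    also have "\<dots> = q powi (2 * int n * int k - int n ^ 2) * q powi int (fmaj \<sigma>)"
      unfolding e using assms(2) by (rule power_int_add[OF disjI1])
    also have "\<dots> = q powi (2 * int n * int k - int n ^ 2) * q ^ fmaj \<sigma>" by simp
    finally show "q ^ fmaj (flipB n \<sigma>) = q powi (2 * int n * int k - int n ^ 2) * q ^ fmaj \<sigma>"
      by (simp add: \<pi>_def)
  qed simp
  also have "\<dots> = q powi (2 * int n * int k - int n ^ 2) * Bnk n (n - k) q"
    by (simp add: Bnk_def A_def sum_distrib_left)
  finally show ?thesis .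
qed

end
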